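(* Let $(A,\circ_A,[\cdot,\cdot]_A)$ and $(B,\circ_B,[\cdot,\cdot]_B)$ be dual pre-Poisson algebras. Define bilinear operations on $A\otimes B$ by $$(x\otimes a)\circ_{A\otimes B}(y\otimes b)=(x\circ_A y)\otimes(a\circ_B b),$$ $$[x\otimes a,y\otimes b]_{A\otimes B}=[x,y]_A\otimes(a\circ_B b)+(x\circ_A y)\otimes[a,b]_B,$$ for $x,y\in A$, $a,b\in B$. Then $(A\otimes B,\circ_{A\otimes B},[\cdot,\cdot]_{A\otimes B})$ is a dual pre-Poisson algebra.
   Context: Field $\mathbb{F}$ of characteristic $0$. A dual pre-Poisson algebra is a vector space with bilinear operations $\circ,[\cdot,\cdot]$ satisfying, for all $x,y,z$: $x\circ(y\circ z)=(x\circ y)\circ z=(y\circ x)\circ z$; $[x,[y,z]]=[[x,y],z]+[y,[x,z]]$; $[x,y\circ z]=[x,y]\circ z+y\circ[x,z]$; $[x\circ y,z]=x\circ[y,z]+y\circ[x,z]$; $[x,y]\circ z=-[y,x]\circ z$. *)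

theory Defs
  imports Complex_Main
begin

definition bilinear_map ::
  "('k::field \<Rightarrow> 'a::ab_group_add \<Rightarrow> 'a) \<Rightarrow> ('k \<Rightarrow> 'b::ab_group_add \<Rightarrow> 'b) \<Rightarrow>
   ('k \<Rightarrow> 'c::ab_group_add \<Rightarrow> 'c) \<Rightarrow> ('a \<Rightarrow> 'b \<Rightarrow> 'c) \<Rightarrow> bool" where
  "bilinear_map sA sB sC f \<longleftrightarrow>
     (\<forall>x. Vector_Spaces.linear sB sC (f x)) \<and> (\<forall>y. Vector_Spaces.linear sA sC (\<lambda>x. f x y))"

definition dual_pre_Poisson ::
  "('k::field \<Rightarrow> 'a::ab_group_add \<Rightarrow> 'a) \<Rightarrow> ('a \<Rightarrow> 'a \<Rightarrow> 'a) \<Rightarrow> ('a \<Rightarrow> 'a \<Rightarrow> 'a) \<Rightarrow> bool" where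
  "dual_pre_Poisson s circ br \<longleftrightarrow>
     vector_space s \<and> bilinear_map s s s circ \<and> bilinear_map s s s br \<and>
     (\<forall>x y z.
        circ x (circ y z) = circ (circ x y) z \<and>
        circ (circ x y) z = circ (circ y x) z \<and>
        br x (br y z) = br (br x y) z + br y (br x z) \<and>
        br x (circ y z) = circ (br x y) z + circ y (br x z) \<and>
        br (circ x y) z = circ x (br y z) + circ y (br x z) \<and>
        circ (br x y) z = - circ (br y x) z)"

text \<open>(T, tens) is a tensor product of the vector spaces (A, sA) and (B, sB):
tens is bilinear, the pure tensors span T, and every bilinear form on A \<times> B
factors through a linear functional on T (universal property; together with
spanning this determines T up to unique isomorphism as A \<otimes> B).\<close>

definition is_tensor_product ::
  "('k::field \<Rightarrow> 'a::ab_group_add \<Rightarrow> 'a) \<Rightarrow> ('k \<Rightarrow> 'b::ab_group_add \<Rightarrow> 'b) \<Rightarrow>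
   ('k \<Rightarrow> 't::ab_group_add \<Rightarrow> 't) \<Rightarrow> ('a \<Rightarrow> 'b \<Rightarrow> 't) \<Rightarrow> bool" where
  "is_tensor_product sA sB sT tens \<longleftrightarrow>
     vector_space sA \<and> vector_space sB \<and> vector_space sT \<and>
     bilinear_map sA sB sT tens \<and>
     module.span sT (range (case_prod tens)) = UNIV \<and>
     (\<forall>g. bilinear_map sA sB ((*) :: 'k \<Rightarrow> 'k \<Rightarrow> 'k) g \<longrightarrow>
        (\<exists>h. Vector_Spaces.linear sT ((*) :: 'k \<Rightarrow> 'k \<Rightarrow> 'k) h \<and> (\<forall>x y. h (tens x y) = g x y)))"

end

theory Submission imports Defs begin
lemma lin_neg:
  assumes "\<And>x y. f (x + y) = f x + (f y :: 'b::ab_group_add)"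
  shows "f (- x) = - f (x::'a::ab_group_add)"
proof -
  have "f 0 = 0" using assms[of 0 0] by simp
  then have "f x + f (-x) = 0" using assms[of x "-x"] by simp
  then show ?thesis by (metis minus_unique)
qed

lemma bil_facts:
  assumes "bilinear_map s1 s2 s3 f"
  shows "f (x+y) z = f x z + f y z" "f x (z+w) = f x z + f x w"
    "f (-x) z = - f x z" "f x (-z) = - f x z"
    "f (s1 c x) z = s3 c (f x z)" "f x (s2 c z) = s3 c (f x z)"
proof -
  have l1: "Vector_Spaces.linear s2 s3 (f x)" using assms unfolding bilinear_map_def by blast
  have l2: "Vector_Spaces.linear s1 s3 (\<lambda>x. f x z)" using assms unfolding bilinear_map_def by blast
  show "f (x+y) z = f x z + f y z" using l2[unfolded Vector_Spaces.linear_iff] by simp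
  show "f x (z+w) = f x z + f x w" using l1[unfolded Vector_Spaces.linear_iff] by simp
  show "f (-x) z = - f x z" using l2[unfolded Vector_Spaces.linear_iff] by (intro lin_neg[where f="\<lambda>x. f x z"]) simp
  show "f x (-z) = - f x z" using l1[unfolded Vector_Spaces.linear_iff] by (intro lin_neg[where f="f x"]) simp
  show "f (s1 c x) z = s3 c (f x z)" using l2[unfolded Vector_Spaces.linear_iff] by simp
  show "f x (s2 c z) = s3 c (f x z)" using l1[unfolded Vector_Spaces.linear_iff] by simp
qed

lemma ext3:
  assumes vs: "vector_space s" and sp: "module.span s P = UNIV"
    and l1: "\<And>y z. Vector_Spaces.linear s s (\<lambda>x. f x y z)" "\<And>y z. Vector_Spaces.linear s s (\<lambda>x. g x y z)"
    and l2: "\<And>x z. Vector_Spaces.linear s s (\<lambda>y. f x y z)" "\<And>x z. Vector_Spaces.linear s s (\<lambda>y. g x y z)"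
    and l3: "\<And>x y. Vector_Spaces.linear s s (\<lambda>z. f x y z)" "\<And>x y. Vector_Spaces.linear s s (\<lambda>z. g x y z)"
    and eq: "\<And>x y z. x \<in> P \<Longrightarrow> y \<in> P \<Longrightarrow> z \<in> P \<Longrightarrow> f x y z = g x y z"
  shows "f x y z = g x y z"
proof -
  interpret vp: vector_space_pair s s using vs by (simp add: vector_space_pair_def)
  have s: "v \<in> module.span s P" for v using sp by simp
  have e1: "f x y z = g x y z" if "x \<in> P" "y \<in> P" for x y z
    by (rule vp.linear_eq_on[OF l3(1)[of x y] l3(2)[of x y] s[of z]]) (simp add: eq that)
  have e2: "f x y z = g x y z" if "x \<in> P" for x y z
    by (rule vp.linear_eq_on[OF l2(1)[of x z] l2(2)[of x z] s[of y]]) (simp add: e1 that)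
  show ?thesis
    by (rule vp.linear_eq_on[OF l1(1)[of y z] l1(2)[of y z] s[of x]]) (simp add: e2)
qed

theorem proposition2p5:
  fixes sA :: "'k::field_char_0 \<Rightarrow> 'a::ab_group_add \<Rightarrow> 'a"
    and sB :: "'k \<Rightarrow> 'b::ab_group_add \<Rightarrow> 'b"
    and sT :: "'k \<Rightarrow> 't::ab_group_add \<Rightarrow> 't"
    and cA bA :: "'a \<Rightarrow> 'a \<Rightarrow> 'a"
    and cB bB :: "'b \<Rightarrow> 'b \<Rightarrow> 'b"
    and tens :: "'a \<Rightarrow> 'b \<Rightarrow> 't"
    and cT bT :: "'t \<Rightarrow> 't \<Rightarrow> 't"
  assumes A: "dual_pre_Poisson sA cA bA"
    and B: "dual_pre_Poisson sB cB bB"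
    and T: "is_tensor_product sA sB sT tens"
    and cT_bil: "bilinear_map sT sT sT cT"
    and bT_bil: "bilinear_map sT sT sT bT"
    and cT_def: "\<And>x y a b. cT (tens x a) (tens y b) = tens (cA x y) (cB a b)"
    and bT_def: "\<And>x y a b. bT (tens x a) (tens y b) = tens (bA x y) (cB a b) + tens (cA x y) (bB a b)"
  shows "dual_pre_Poisson sT cT bT"
proof -
  have vsT: "vector_space sT" and sp: "module.span sT (range (case_prod tens)) = UNIV"
    and tb: "bilinear_map sA sB sT tens"
    using T unfolding is_tensor_product_def by auto
  note cTf = bil_facts[OF cT_bil] and bTf = bil_facts[OF bT_bil] and tf = bil_facts[OF tb]
  have mT: "module sT" using vsT unfolding vector_space_def module_def by simp
  note vsf = module.scale_right_distrib[OF mT] module.scale_minus_right[OF mT]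
  have A1: "\<And>x y z. cA x (cA y z) = cA (cA x y) z"
   and A2: "\<And>x y z. cA (cA x y) z = cA (cA y x) z"
   and A3: "\<And>x y z. bA x (bA y z) = bA (bA x y) z + bA y (bA x z)"
   and A4: "\<And>x y z. bA x (cA y z) = cA (bA x y) z + cA y (bA x z)"
   and A5: "\<And>x y z. bA (cA x y) z = cA x (bA y z) + cA y (bA x z)"
   and A6: "\<And>x y z. cA (bA x y) z = - cA (bA y x) z"
    using A unfolding dual_pre_Poisson_def by blast+
  have A7: "\<And>x y z. cA y (cA x z) = cA (cA x y) z" using A1 A2 by metis
  have B1: "\<And>x y z. cB x (cB y z) = cB (cB x y) z"
   and B2: "\<And>x y z. cB (cB x y) z = cB (cB y x) z"
   and B3: "\<And>x y z. bB x (bB y z) = bB (bB x y) z + bB y (bB x z)"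
   and B4: "\<And>x y z. bB x (cB y z) = cB (bB x y) z + cB y (bB x z)"
   and B5: "\<And>x y z. bB (cB x y) z = cB x (bB y z) + cB y (bB x z)"
   and B6: "\<And>x y z. cB (bB x y) z = - cB (bB y x) z"
    using B unfolding dual_pre_Poisson_def by blast+
  have B7: "\<And>x y z. cB y (cB x z) = cB (cB x y) z" using B1 B2 by metis
  have lin: "Vector_Spaces.linear sT sT f" if "\<And>x y. f (x + y) = f x + f y" "\<And>c x. f (sT c x) = sT c (f x)" for f
    using that vsT unfolding Vector_Spaces.linear_iff by auto
  let ?P = "range (case_prod tens)"
  have I1: "cT x (cT y z) = cT (cT x y) z" for x y z
  proof (rule ext3[OF vsT sp, where f="\<lambda>x y z. cT x (cT y z)" and g="\<lambda>x y z. cT (cT x y) z"])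
    fix x y z assume "x \<in> ?P" "y \<in> ?P" "z \<in> ?P"
    then obtain u a v b w c where "x = tens u a" "y = tens v b" "z = tens w c" by auto
    then show "cT x (cT y z) = cT (cT x y) z"
      by (simp add: cT_def A1 B1)
  qed (rule lin, simp add: cTf bTf vsf, simp add: cTf bTf vsf)+
  have I2: "cT (cT x y) z = cT (cT y x) z" for x y z
  proof (rule ext3[OF vsT sp, where f="\<lambda>x y z. cT (cT x y) z" and g="\<lambda>x y z. cT (cT y x) z"])
    fix x y z assume "x \<in> ?P" "y \<in> ?P" "z \<in> ?P"
    then obtain u a v b w c where "x = tens u a" "y = tens v b" "z = tens w c" by auto
    then show "cT (cT x y) z = cT (cT y x) z"
      by (simp add: cT_def A2[of u v] B2[of a b])
  qed (rule lin, simp add: cTf bTf vsf, simp add: cTf bTf vsf)+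
  have I3: "bT x (bT y z) = bT (bT x y) z + bT y (bT x z)" for x y z
  proof (rule ext3[OF vsT sp, where f="\<lambda>x y z. bT x (bT y z)" and g="\<lambda>x y z. bT (bT x y) z + bT y (bT x z)"])
    fix x y z assume "x \<in> ?P" "y \<in> ?P" "z \<in> ?P"
    then obtain u a v b w c where "x = tens u a" "y = tens v b" "z = tens w c" by auto
    then show "bT x (bT y z) = bT (bT x y) z + bT y (bT x z)"
      apply (simp only: cT_def bT_def bTf tf)
      apply (simp only: A3[of u v w] B1[of a b c] B4[of a b c] A4[of u v w] A1[of u v w] B3[of a b c]
         B5[of a b c] A5[of u v w] B7[of b a c] B4[of b a c] A4[of v u w] A7[of v u w])
      apply (simp only: A6[of v u] B6[of b a])
      apply (simp only: tf)
      apply (simp add: algebra_simps)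
      done
  qed (rule lin, simp add: cTf bTf vsf, simp add: cTf bTf vsf)+
  have I4: "bT x (cT y z) = cT (bT x y) z + cT y (bT x z)" for x y z
  proof (rule ext3[OF vsT sp, where f="\<lambda>x y z. bT x (cT y z)" and g="\<lambda>x y z. cT (bT x y) z + cT y (bT x z)"])
    fix x y z assume "x \<in> ?P" "y \<in> ?P" "z \<in> ?P"
    then obtain u a v b w c where "x = tens u a" "y = tens v b" "z = tens w c" by auto
    then show "bT x (cT y z) = cT (bT x y) z + cT y (bT x z)"
      by (simp add: cT_def bT_def cTf tf A4[of u v w] B1[of a b c] B7[of b a c] B4[of a b c] A1[of u v w] A7[of v u w] algebra_simps)
  qed (rule lin, simp add: cTf bTf vsf, simp add: cTf bTf vsf)+
  have I5: "bT (cT x y) z = cT x (bT y z) + cT y (bT x z)" for x y z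
  proof (rule ext3[OF vsT sp, where f="\<lambda>x y z. bT (cT x y) z" and g="\<lambda>x y z. cT x (bT y z) + cT y (bT x z)"])
    fix x y z assume "x \<in> ?P" "y \<in> ?P" "z \<in> ?P"
    then obtain u a v b w c where "x = tens u a" "y = tens v b" "z = tens w c" by auto
    then show "bT (cT x y) z = cT x (bT y z) + cT y (bT x z)"
      by (simp add: cT_def bT_def cTf tf A5[of u v w] B1[of a b c] B7[of b a c] B5[of a b c] A1[of u v w] A7[of v u w] algebra_simps)
  qed (rule lin, simp add: cTf bTf vsf, simp add: cTf bTf vsf)+
  have I6: "cT (bT x y) z = - cT (bT y x) z" for x y z
  proof (rule ext3[OF vsT sp, where f="\<lambda>x y z. cT (bT x y) z" and g="\<lambda>x y z. - cT (bT y x) z"])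
    fix x y z assume "x \<in> ?P" "y \<in> ?P" "z \<in> ?P"
    then obtain u a v b w c where "x = tens u a" "y = tens v b" "z = tens w c" by auto
    then show "cT (bT x y) z = - cT (bT y x) z"
      by (simp add: cT_def bT_def cTf tf A6[of u v] B2[of a b] A2[of u v] B6[of a b] algebra_simps)
  qed (rule lin, simp add: cTf bTf vsf, simp add: cTf bTf vsf)+
  show ?thesis unfolding dual_pre_Poisson_def
    using vsT cT_bil bT_bil I1 I2 I3 I4 I5 I6 by blast
qed

end
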